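(* Assume $\mu>0$. Let $\alpha\in(0,1)$, $c\in(0,1)$, $C\ge0$, and set $\alpha^k\equiv\alpha$. Let $\psi_i^k,\epsilon_i^k,\tilde x_i^k,\epsilon_{\psi,i}^k$ ($k\ge0$, $i\in[m]$) be random objects on a common probability space such that, almost surely, $(\{\psi_i^k\},\{\alpha^k\},\{\epsilon_i^k\})$ is an inexact estimating sequence, $\epsilon_{\psi,i}^0=0$ and $M(\tilde x_i^k)\le\min_x\psi_i^k(x)+\epsilon_{\psi,i}^k$ for all $k,i$; assume $\psi_i^0$ is deterministic and all expectations below are finite. With $\epsilon_{tot,i}^k:=\epsilon_{\psi,i}^{k+1}-(1-\alpha)\epsilon_{\psi,i}^k+\alpha\epsilon_i^k$, suppose $$\frac1m\sum_{i=1}^m\mathbb{E}\big[|\epsilon_{tot,i}^k|\big]\le C(1-c\alpha)^k\quad\forall k\ge0.$$ Then for all $k\ge0$, $$\frac1m\sum_{i=1}^m\mathbb{E}\big[\|\tilde x_i^k-x^\star\|^2\big]\le c_{scvx}(1-c\alpha)^k,\qquad c_{scvx}:=\frac1m\sum_{i=1}^m\frac{2}{\mu_M}\Big(\psi_i^0(x^\star)-M^\star+\frac{C}{\alpha(1-c)}\Big).$$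
   Context: Setting: $u=f+r$ on $\mathbb{R}^d$ with $f=\frac1m\sum_{i=1}^m f_i$, each $f_i$ continuously differentiable and convex, $f$ $\mu$-strongly convex and $L$-smooth, $r$ proper closed convex; $x^\star$ is the minimizer of $u$. Fix $\delta>0$. $M(x):=\min_y\{u(y)+\frac\delta2\|y-x\|^2\}$ (Moreau envelope; $\delta$-smooth and $\mu_M$-strongly convex with $\mu_M:=\delta\mu/(\delta+\mu)$), $M^\star:=\min M=u(x^\star)$. Definition (inexact estimating sequence): functions $\psi_i^k:\mathbb{R}^d\to\mathbb{R}$ (each attaining its minimum), numbers $\alpha^k$ and reals $\epsilon_i^k$ ($k\ge0$, $i\in[m]$) such that (i) $\alpha^k\in(0,1)$ and $\prod_{t=0}^k(1-\alpha^t)\to0$; (ii) $\psi_i^{k+1}(x^\star)\le(1-\alpha^k)\psi_i^k(x^\star)+\alpha^k(M^\star+\epsilon_i^k)$ for all $k,i$. *)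

theory Defs
  imports "HOL-Analysis.Analysis" "HOL-Probability.Probability"
begin

definition proper_fun :: "('a \<Rightarrow> ereal) \<Rightarrow> bool" where
  "proper_fun r \<longleftrightarrow> (\<forall>x. r x \<noteq> -\<infinity>) \<and> (\<exists>x. r x \<noteq> \<infinity>)"

definition closed_fun :: "('a::topological_space \<Rightarrow> ereal) \<Rightarrow> bool" where
  "closed_fun r \<longleftrightarrow> closed {(x, t::real). r x \<le> ereal t}"

definition convex_efun :: "('a::real_vector \<Rightarrow> ereal) \<Rightarrow> bool" where
  "convex_efun r \<longleftrightarrow> (\<forall>x y t. 0 \<le> t \<and> t \<le> 1 \<longrightarrow>
      r ((1 - t) *\<^sub>R x + t *\<^sub>R y) \<le> ereal (1 - t) * r x + ereal t * r y)"

definition strongly_convex :: "real \<Rightarrow> ('a::real_normed_vector \<Rightarrow> real) \<Rightarrow> bool" where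
  "strongly_convex \<mu> f \<longleftrightarrow> (\<forall>x y t. 0 \<le> t \<and> t \<le> 1 \<longrightarrow>
      f ((1 - t) *\<^sub>R x + t *\<^sub>R y) \<le> (1 - t) * f x + t * f y - \<mu> / 2 * t * (1 - t) * (norm (x - y))\<^sup>2)"

definition cont_diff :: "('a::euclidean_space \<Rightarrow> real) \<Rightarrow> bool" where
  "cont_diff f \<longleftrightarrow> (\<exists>g. continuous_on UNIV g \<and> (\<forall>x. (f has_derivative (\<lambda>h. g x \<bullet> h)) (at x)))"

definition L_smooth :: "real \<Rightarrow> ('a::euclidean_space \<Rightarrow> real) \<Rightarrow> bool" where
  "L_smooth L f \<longleftrightarrow> (\<exists>g. (\<forall>x. (f has_derivative (\<lambda>h. g x \<bullet> h)) (at x)) \<and>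
      (\<forall>x y. norm (g x - g y) \<le> L * norm (x - y)))"

definition moreau :: "real \<Rightarrow> ('a::real_normed_vector \<Rightarrow> ereal) \<Rightarrow> 'a \<Rightarrow> real" where
  "moreau \<delta> u x = real_of_ereal (INF y. u y + ereal (\<delta> / 2 * (norm (y - x))\<^sup>2))"

definition inexact_est_seq ::
  "nat \<Rightarrow> 'a \<Rightarrow> real \<Rightarrow> (nat \<Rightarrow> nat \<Rightarrow> 'a \<Rightarrow> real) \<Rightarrow> (nat \<Rightarrow> real) \<Rightarrow> (nat \<Rightarrow> nat \<Rightarrow> real) \<Rightarrow> bool" where
  "inexact_est_seq m xs Ms \<psi> \<alpha> \<epsilon> \<longleftrightarrow>
     (\<forall>k. \<forall>i<m. \<exists>x. \<forall>y. \<psi> k i x \<le> \<psi> k i y) \<and>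
     (\<forall>k. 0 < \<alpha> k \<and> \<alpha> k < 1) \<and>
     (\<lambda>k. \<Prod>t\<le>k. 1 - \<alpha> t) \<longlonglongrightarrow> 0 \<and>
     (\<forall>k. \<forall>i<m. \<psi> (Suc k) i xs \<le> (1 - \<alpha> k) * \<psi> k i xs + \<alpha> k * (Ms + \<epsilon> k i))"

end

theory Submission
  imports Defs "HOL-Probability.Probability"
begin


lemma sum_shift_pow:
  fixes p :: real
  shows "(\<Sum>j<Suc k. p^(Suc k - Suc j) * g j) = p * (\<Sum>j<k. p^(k - Suc j) * g j) + g k"
proof -
  have "(\<Sum>j<k. p^(Suc k - Suc j) * g j) = (\<Sum>j<k. p * (p^(k - Suc j) * g j))"
  proof (rule sum.cong)
    fix j assume "j \<in> {..<k}"
    then have "Suc k - Suc j = Suc (k - Suc j)" by auto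
    then show "p^(Suc k - Suc j) * g j = p * (p^(k - Suc j) * g j)" by simp
  qed simp
  then show ?thesis by (simp add: sum_distrib_left)
qed

lemma rec_bound:
  fixes a e :: "nat \<Rightarrow> real"
  assumes "\<And>k. a (Suc k) \<le> p * a k + e k" "0 \<le> p"
  shows "a k \<le> p^k * a 0 + (\<Sum>j<k. p^(k - Suc j) * \<bar>e j\<bar>)"
proof (induction k)
  case 0 then show ?case by simp
next
  case (Suc k)
  have "a (Suc k) \<le> p * a k + e k" by (rule assms(1))
  also have "\<dots> \<le> p * (p^k * a 0 + (\<Sum>j<k. p^(k - Suc j) * \<bar>e j\<bar>)) + \<bar>e k\<bar>"
    using Suc assms(2) by (smt (verit) mult_left_mono)
  also have "\<dots> = p^Suc k * a 0 + (\<Sum>j<Suc k. p^(Suc k - Suc j) * \<bar>e j\<bar>)"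
    by (simp only: sum_shift_pow) (simp add: algebra_simps)
  finally show ?case .
qed

lemma geo_bound:
  fixes p q :: real
  assumes "0 \<le> p" "p < q"
  shows "(\<Sum>j<k. p^(k - Suc j) * q^j) \<le> q^k / (q - p)"
proof (induction k)
  case 0 then show ?case using assms by simp
next
  case (Suc k)
  have "(\<Sum>j<Suc k. p^(Suc k - Suc j) * q^j) = p * (\<Sum>j<k. p^(k - Suc j) * q^j) + q^k"
    by (rule sum_shift_pow)
  also have "\<dots> \<le> p * (q^k / (q - p)) + q^k"
    using mult_left_mono[OF Suc assms(1)] by linarith
  also have "\<dots> = q^Suc k / (q - p)"
    using assms by (simp add: field_simps)
  finally show ?case .
qed

lemma quad_ineq:
  fixes \<mu> \<delta> a b d :: real
  assumes "0 < \<mu>" "0 < \<delta>" "0 \<le> d" "d \<le> a + b"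
  shows "\<delta> * \<mu> / (\<delta> + \<mu>) * d^2 \<le> \<mu> * a^2 + \<delta> * b^2"
proof -
  have "(\<mu> + \<delta>) * (\<mu> * a^2 + \<delta> * b^2) - \<mu> * \<delta> * (a + b)^2 = (\<mu> * a - \<delta> * b)^2"
    by (simp add: power2_eq_square algebra_simps)
  then have h: "\<mu> * \<delta> * (a + b)^2 \<le> (\<mu> + \<delta>) * (\<mu> * a^2 + \<delta> * b^2)"
    by (smt (verit) zero_le_power2)
  have "d^2 \<le> (a+b)^2" using assms by (simp add: power_mono)
  then have "\<mu> * \<delta> * d^2 \<le> (\<mu> + \<delta>) * (\<mu> * a^2 + \<delta> * b^2)"
    using h assms by (smt (verit) mult_left_mono mult_pos_pos)
  then show ?thesis using assms by (simp add: field_simps)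
qed



lemma u_fin:
  fixes f :: "'a \<Rightarrow> real" and r :: "'a \<Rightarrow> ereal"
  assumes u: "u = (\<lambda>x. ereal (f x) + r x)" and pr: "proper_fun r" and mn: "\<forall>y. u xs \<le> u y"
  shows "u xs = ereal (real_of_ereal (u xs))"
proof -
  obtain x0 where x0: "r x0 \<noteq> \<infinity>" using pr unfolding proper_fun_def by blast
  have "r x0 \<noteq> -\<infinity>" using pr unfolding proper_fun_def by blast
  then have "u x0 < \<infinity>" using x0 u by auto
  then have "u xs \<noteq> \<infinity>" using mn by (metis less_le_not_le top_greatest) 
  moreover have "u xs \<noteq> -\<infinity>" using pr u unfolding proper_fun_def by auto
  ultimately show ?thesis by (cases "u xs") auto
qed

lemma u_lower:
  fixes f :: "'a::real_normed_vector \<Rightarrow> real" and r :: "'a \<Rightarrow> ereal"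
  assumes u: "u = (\<lambda>x. ereal (f x) + r x)" and pr: "proper_fun r" and mn: "\<forall>y. u xs \<le> u y"
    and sc: "strongly_convex \<mu> f" and cv: "convex_efun r" and mu: "0 < \<mu>"
  shows "ereal (real_of_ereal (u xs) + \<mu>/2 * (norm (y - xs))\<^sup>2) \<le> u y"
proof (cases "r y = \<infinity>")
  case True then show ?thesis using u by simp
next
  case False
  have fin: "u xs = ereal (real_of_ereal (u xs))" by (rule u_fin[OF u pr mn])
  obtain b where b: "r y = ereal b" using False pr unfolding proper_fun_def by (cases "r y") auto
  have "r xs \<noteq> \<infinity>" "r xs \<noteq> -\<infinity>" using fin u pr unfolding proper_fun_def by auto
  then obtain a where a: "r xs = ereal a" by (cases "r xs") auto
  define d where "d = (norm (y - xs))\<^sup>2"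
  have key: "f xs + a \<le> f y + b - \<mu>/2 * (1 - t) * d" if t: "0 < t" "t \<le> 1" for t
  proof -
    define z where "z = (1 - t) *\<^sub>R xs + t *\<^sub>R y"
    have fz: "f z \<le> (1 - t) * f xs + t * f y - \<mu> / 2 * t * (1 - t) * d"
      using sc t unfolding strongly_convex_def z_def d_def by (auto simp: norm_minus_commute)
    have rz: "r z \<le> ereal ((1 - t) * a + t * b)"
      using cv t a b unfolding convex_efun_def z_def by (metis order.strict_implies_order times_ereal.simps(1) plus_ereal.simps(1))
    have "r z \<noteq> -\<infinity>" using pr unfolding proper_fun_def by auto
    then obtain c where c: "r z = ereal c" using rz by (cases "r z") auto
    have "u xs \<le> u z" using mn by blast
    then have "f xs + a \<le> f z + c" using u a c by simp
    moreover have "c \<le> (1 - t) * a + t * b" using rz c by simp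
    ultimately have "f xs + a \<le> (1 - t) * (f xs + a) + t * (f y + b) - \<mu> / 2 * t * (1 - t) * d"
      using fz by (simp add: algebra_simps)
    then have "t * (f xs + a) \<le> t * (f y + b - \<mu> / 2 * (1 - t) * d)" by (simp add: algebra_simps)
    then show ?thesis using t by simp
  qed
  have ux: "real_of_ereal (u xs) = f xs + a" using u a by simp
  have "f xs + a + \<mu>/2 * d \<le> f y + b"
  proof (rule ccontr)
    assume na: "\<not> ?thesis"
    define g where "g = f xs + a + \<mu>/2 * d - (f y + b)"
    have g: "0 < g" using na unfolding g_def by simp
    have "f xs + a \<le> f y + b" using key[of 1] by simp
    then have "0 < \<mu>/2 * d" using g unfolding g_def by linarith
    then have dpos: "0 < \<mu> * d" by simp
    define t where "t = g / (g + \<mu> * d)"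
    have t: "0 < t" "t \<le> 1" using g dpos unfolding t_def by (auto simp: field_simps)
    have e: "\<mu>/2 * t * d = (\<mu> * d) * g / (2 * (g + \<mu> * d))" unfolding t_def by (simp add: field_simps)
    have "(\<mu> * d) * g < g * (2 * (g + \<mu> * d))"
    proof -
      have "0 < (\<mu> * d) * g" "0 < g * g" using g dpos by simp_all
      then show ?thesis by (simp add: algebra_simps)
    qed
    then have "\<mu>/2 * t * d < g" unfolding e using g dpos by (simp add: divide_less_eq)
    then show False using key[OF t] unfolding g_def by (simp add: algebra_simps diff_divide_distrib)
  qed
  then show ?thesis using ux u b unfolding d_def by simp
qed

lemma M_lower:
  fixes f :: "'a::real_normed_vector \<Rightarrow> real" and r :: "'a \<Rightarrow> ereal"
  assumes u: "u = (\<lambda>x. ereal (f x) + r x)" and pr: "proper_fun r" and mn: "\<forall>y. u xs \<le> u y"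
    and sc: "strongly_convex \<mu> f" and cv: "convex_efun r" and mu: "0 < \<mu>" and de: "0 < \<delta>"
  shows "real_of_ereal (u xs) + \<delta> * \<mu> / (\<delta> + \<mu>) / 2 * (norm (x - xs))\<^sup>2 \<le> moreau \<delta> u x"
proof -
  define L where "L = real_of_ereal (u xs) + \<delta> * \<mu> / (\<delta> + \<mu>) / 2 * (norm (x - xs))\<^sup>2"
  define E where "E = (INF y. u y + ereal (\<delta> / 2 * (norm (y - x))\<^sup>2))"
  have lo: "ereal L \<le> E" unfolding E_def
  proof (rule INF_greatest)
    fix y
    have h1: "ereal (real_of_ereal (u xs) + \<mu>/2 * (norm (y - xs))\<^sup>2) \<le> u y"
      by (rule u_lower[OF u pr mn sc cv mu])
    have tri: "norm (x - xs) \<le> norm (y - xs) + norm (y - x)"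
    proof -
      have "x - xs = (y - xs) - (y - x)" by simp
      then show ?thesis using norm_triangle_ineq4[of "y - xs" "y - x"] by simp
    qed
    have "\<delta> * \<mu> / (\<delta> + \<mu>) * (norm (x - xs))^2 \<le> \<mu> * (norm (y - xs))^2 + \<delta> * (norm (y - x))^2"
      by (rule quad_ineq[OF mu de norm_ge_zero tri])
    moreover have gen: "\<And>R K N A B m d::real. K*N \<le> m*A + d*B \<Longrightarrow> R + K/2*N \<le> R + m/2*A + d/2*B"
      by (simp add: field_simps)
    ultimately have "L \<le> real_of_ereal (u xs) + \<mu>/2 * (norm (y - xs))\<^sup>2 + \<delta> / 2 * (norm (y - x))\<^sup>2"
      unfolding L_def by blast
    then have "ereal L \<le> ereal (real_of_ereal (u xs) + \<mu>/2 * (norm (y - xs))\<^sup>2) + ereal (\<delta> / 2 * (norm (y - x))\<^sup>2)"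
      by simp
    also have "\<dots> \<le> u y + ereal (\<delta> / 2 * (norm (y - x))\<^sup>2)"
      using h1 by (rule add_right_mono)
    finally show "ereal L \<le> u y + ereal (\<delta> / 2 * (norm (y - x))\<^sup>2)" .
  qed
  have fin: "u xs = ereal (real_of_ereal (u xs))" by (rule u_fin[OF u pr mn])
  have "E \<le> u xs + ereal (\<delta> / 2 * (norm (xs - x))\<^sup>2)" unfolding E_def by (rule INF_lower) simp
  also have "\<dots> < \<infinity>" by (subst fin) simp
  finally have "E < \<infinity>" .
  then obtain e where e: "E = ereal e" using lo by (cases E) auto
  show ?thesis using lo e unfolding moreau_def E_def[symmetric] L_def[symmetric] by simp
qed


theorem proposition5:
  fixes m :: nat and fi :: "nat \<Rightarrow> 'a::euclidean_space \<Rightarrow> real" and r :: "'a \<Rightarrow> ereal"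
    and \<mu> L \<delta> :: real and xs :: 'a
    and P :: "'w measure"
    and \<alpha> c C :: real
    and \<psi> :: "nat \<Rightarrow> nat \<Rightarrow> 'w \<Rightarrow> 'a \<Rightarrow> real" and \<psi>0 :: "nat \<Rightarrow> 'a \<Rightarrow> real"
    and \<epsilon> \<epsilon>\<psi> :: "nat \<Rightarrow> nat \<Rightarrow> 'w \<Rightarrow> real" and xt :: "nat \<Rightarrow> nat \<Rightarrow> 'w \<Rightarrow> 'a"
  defines "f \<equiv> (\<lambda>x. (1 / real m) * (\<Sum>i<m. fi i x))"
  defines "u \<equiv> (\<lambda>x. ereal (f x) + r x)"
  defines "M \<equiv> moreau \<delta> u"
  defines "Mstar \<equiv> real_of_ereal (u xs)"
  defines "\<mu>M \<equiv> \<delta> * \<mu> / (\<delta> + \<mu>)"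
  defines "\<epsilon>tot \<equiv> (\<lambda>k i w. \<epsilon>\<psi> (Suc k) i w - (1 - \<alpha>) * \<epsilon>\<psi> k i w + \<alpha> * \<epsilon> k i w)"
  defines "cscvx \<equiv> (1 / real m) * (\<Sum>i<m. 2 / \<mu>M * (\<psi>0 i xs - Mstar + C / (\<alpha> * (1 - c))))"
  assumes m_pos: "0 < m"
    and fi_C1: "\<And>i. i < m \<Longrightarrow> cont_diff (fi i)"
    and fi_convex: "\<And>i. i < m \<Longrightarrow> convex_on UNIV (fi i)"
    and f_sc: "strongly_convex \<mu> f"
    and f_smooth: "L_smooth L f"
    and r_proper: "proper_fun r" and r_closed: "closed_fun r" and r_convex: "convex_efun r"
    and xs_min: "\<forall>y. u xs \<le> u y"
    and \<delta>_pos: "0 < \<delta>"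
    and \<mu>_pos: "0 < \<mu>"
    and \<alpha>: "0 < \<alpha>" "\<alpha> < 1"
    and c: "0 < c" "c < 1"
    and C: "0 \<le> C"
    and P: "prob_space P"
    and est: "AE w in P. inexact_est_seq m xs Mstar (\<lambda>k i. \<psi> k i w) (\<lambda>_. \<alpha>) (\<lambda>k i. \<epsilon> k i w)"
    and e\<psi>0: "AE w in P. \<forall>i<m. \<epsilon>\<psi> 0 i w = 0"
    and xt_bound: "AE w in P. \<forall>k. \<forall>i<m. M (xt k i w) \<le> (INF x. \<psi> k i w x) + \<epsilon>\<psi> k i w"
    and \<psi>0_det: "\<And>w i. w \<in> space P \<Longrightarrow> i < m \<Longrightarrow> \<psi> 0 i w = \<psi>0 i"
    and int_tot: "\<And>k i. i < m \<Longrightarrow> integrable P (\<lambda>w. \<epsilon>tot k i w)"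
    and int_x: "\<And>k i. i < m \<Longrightarrow> integrable P (\<lambda>w. (norm (xt k i w - xs))\<^sup>2)"
    and tot_bound: "\<And>k. (1 / real m) * (\<Sum>i<m. (\<integral>w. \<bar>\<epsilon>tot k i w\<bar> \<partial>P)) \<le> C * (1 - c * \<alpha>) ^ k"
  shows "\<forall>k. (1 / real m) * (\<Sum>i<m. (\<integral>w. (norm (xt k i w - xs))\<^sup>2 \<partial>P)) \<le> cscvx * (1 - c * \<alpha>) ^ k"
  proof -
  interpret P: prob_space P by (rule P)
  define p where "p = 1 - \<alpha>"
  define q where "q = 1 - c * \<alpha>"
  define A where "A i = \<psi>0 i xs - Mstar" for i
  have p0: "0 \<le> p" using \<alpha> unfolding p_def by simp
  have pq: "p < q" using \<alpha> c unfolding p_def q_def by (simp add: mult_less_cancel_right1)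
  have q0: "0 \<le> q" using pq p0 by simp
  have qp: "q - p = \<alpha> * (1 - c)" unfolding p_def q_def by (simp add: algebra_simps)
  have \<mu>M: "0 < \<mu>M" unfolding \<mu>M_def using \<delta>_pos \<mu>_pos by simp
  have ueq: "u = (\<lambda>x. ereal (f x) + r x)" by (simp add: u_def)
  have xsmin: "\<forall>y. u xs \<le> u y" by (rule xs_min)
  have Mlow: "Mstar + \<mu>M / 2 * (norm (x - xs))\<^sup>2 \<le> M x" for x
    using M_lower[OF ueq r_proper xsmin f_sc r_convex \<mu>_pos \<delta>_pos, of x]
    unfolding M_def Mstar_def \<mu>M_def by simp
  define good where "good w \<longleftrightarrow> w \<in> space P \<and>
      inexact_est_seq m xs Mstar (\<lambda>k i. \<psi> k i w) (\<lambda>_. \<alpha>) (\<lambda>k i. \<epsilon> k i w) \<and>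
      (\<forall>i<m. \<epsilon>\<psi> 0 i w = 0) \<and>
      (\<forall>k. \<forall>i<m. M (xt k i w) \<le> (INF x. \<psi> k i w x) + \<epsilon>\<psi> k i w)" for w
  have AEg: "AE w in P. good w"
    using AE_space est e\<psi>0 xt_bound unfolding good_def by eventually_elim auto
  have pt: "(norm (xt k i w - xs))\<^sup>2 \<le> 2 / \<mu>M * (p^k * A i + (\<Sum>j<k. p^(k - Suc j) * \<bar>\<epsilon>tot j i w\<bar>))"
    if g: "good w" and i: "i < m" for w i k
  proof -
    have w: "w \<in> space P" and es: "inexact_est_seq m xs Mstar (\<lambda>k i. \<psi> k i w) (\<lambda>_. \<alpha>) (\<lambda>k i. \<epsilon> k i w)"
      and z: "\<epsilon>\<psi> 0 i w = 0" and xb: "M (xt k i w) \<le> (INF x. \<psi> k i w x) + \<epsilon>\<psi> k i w"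
      using g i unfolding good_def by auto
    define a where "a k = \<psi> k i w xs - Mstar + \<epsilon>\<psi> k i w" for k
    have rec: "a (Suc k) \<le> p * a k + \<epsilon>tot k i w" for k
    proof -
      have "\<psi> (Suc k) i w xs \<le> (1 - \<alpha>) * \<psi> k i w xs + \<alpha> * (Mstar + \<epsilon> k i w)"
        using es i unfolding inexact_est_seq_def by blast
      then show ?thesis unfolding a_def \<epsilon>tot_def p_def by (simp add: algebra_simps)
    qed
    have ak: "a k \<le> p^k * a 0 + (\<Sum>j<k. p^(k - Suc j) * \<bar>\<epsilon>tot j i w\<bar>)"
      using rec_bound[where a=a and p=p and e="\<lambda>j. \<epsilon>tot j i w" and k=k] rec p0 by blast
    have a0: "a 0 = A i" unfolding a_def A_def using \<psi>0_det[OF w i] z by simp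
    obtain x0 where x0: "\<forall>y. \<psi> k i w x0 \<le> \<psi> k i w y"
      using es i unfolding inexact_est_seq_def by blast
    have "bdd_below (range (\<psi> k i w))" using x0 by (auto intro: bdd_belowI)
    then have "(INF x. \<psi> k i w x) \<le> \<psi> k i w xs" by (rule cINF_lower) simp
    then have "M (xt k i w) \<le> a k + Mstar" using xb unfolding a_def by simp
    then have "\<mu>M / 2 * (norm (xt k i w - xs))\<^sup>2 \<le> a k" using Mlow[of "xt k i w"] by simp
    then have "(norm (xt k i w - xs))\<^sup>2 \<le> 2 / \<mu>M * a k" using \<mu>M by (simp add: field_simps)
    also have "\<dots> \<le> 2 / \<mu>M * (p^k * A i + (\<Sum>j<k. p^(k - Suc j) * \<bar>\<epsilon>tot j i w\<bar>))"
      using ak a0 \<mu>M by (intro mult_left_mono) simp_all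
    finally show ?thesis .
  qed
  have "\<exists>w. good w"
  proof (rule ccontr)
    assume "\<not> (\<exists>w. good w)"
    then have "AE w in P. False" using AEg by (auto elim: eventually_mono)
    then show False using P.AE_False by simp
  qed
  then obtain w0 where w0: "good w0" by blast
  have A0: "0 \<le> A i" if i: "i < m" for i
  proof -
    have "(norm (xt 0 i w0 - xs))\<^sup>2 \<le> 2 / \<mu>M * A i" using pt[OF w0 i, of 0] by simp
    then have "0 \<le> 2 / \<mu>M * A i" using zero_le_power2 order_trans by blast
    then show ?thesis using \<mu>M by (simp add: zero_le_divide_iff)
  qed
  define I where "I j i = (\<integral>w. \<bar>\<epsilon>tot j i w\<bar> \<partial>P)" for j i
  define B where "B = (1 / real m) * (\<Sum>i<m. A i)"
  have B0: "0 \<le> B" unfolding B_def using A0 by (intro mult_nonneg_nonneg sum_nonneg) auto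
  show ?thesis
  proof
    fix k
    have intb: "(\<integral>w. (norm (xt k i w - xs))\<^sup>2 \<partial>P) \<le> 2 / \<mu>M * (p^k * A i + (\<Sum>j<k. p^(k - Suc j) * I j i))"
      if i: "i < m" for i
    proof -
      have iabs: "integrable P (\<lambda>w. \<bar>\<epsilon>tot j i w\<bar>)" for j using int_tot[OF i] by simp
      have intR: "integrable P (\<lambda>w. 2 / \<mu>M * (p^k * A i + (\<Sum>j<k. p^(k - Suc j) * \<bar>\<epsilon>tot j i w\<bar>)))"
        using iabs by simp
      have "(\<integral>w. (norm (xt k i w - xs))\<^sup>2 \<partial>P) \<le> (\<integral>w. 2 / \<mu>M * (p^k * A i + (\<Sum>j<k. p^(k - Suc j) * \<bar>\<epsilon>tot j i w\<bar>)) \<partial>P)"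
        by (rule integral_mono_AE[OF int_x[OF i] intR]) (use AEg pt i in \<open>auto elim: eventually_mono\<close>)
      also have "\<dots> = 2 / \<mu>M * (p^k * A i + (\<Sum>j<k. p^(k - Suc j) * I j i))"
        using iabs unfolding I_def by (simp add: Bochner_Integration.integral_add P.prob_space)
      finally show ?thesis .
    qed
    have "(1 / real m) * (\<Sum>i<m. (\<integral>w. (norm (xt k i w - xs))\<^sup>2 \<partial>P))
        \<le> (1 / real m) * (\<Sum>i<m. 2 / \<mu>M * (p^k * A i + (\<Sum>j<k. p^(k - Suc j) * I j i)))"
      using intb by (intro mult_left_mono sum_mono) auto
    also have "\<dots> = 2 / \<mu>M * (p^k * B + (\<Sum>j<k. p^(k - Suc j) * ((1 / real m) * (\<Sum>i<m. I j i))))"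
    proof -
      have s1: "(\<Sum>i<m. 2 / \<mu>M * (p^k * A i + (\<Sum>j<k. p^(k - Suc j) * I j i)))
          = 2 / \<mu>M * ((\<Sum>i<m. p^k * A i) + (\<Sum>i<m. \<Sum>j<k. p^(k - Suc j) * I j i))"
        by (simp only: sum.distrib[symmetric] sum_distrib_left)
      have s2: "(\<Sum>i<m. p^k * A i) = p^k * (\<Sum>i<m. A i)" by (simp add: sum_distrib_left)
      have s3: "(\<Sum>i<m. \<Sum>j<k. p^(k - Suc j) * I j i) = (\<Sum>j<k. p^(k - Suc j) * (\<Sum>i<m. I j i))"
        by (subst sum.swap) (simp add: sum_distrib_left)
      have s4: "(\<Sum>j<k. p^(k - Suc j) * ((1 / real m) * (\<Sum>i<m. I j i))) = (1 / real m) * (\<Sum>j<k. p^(k - Suc j) * (\<Sum>i<m. I j i))"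
      proof -
        have "(1 / real m) * (\<Sum>j<k. p^(k - Suc j) * (\<Sum>i<m. I j i)) = (\<Sum>j<k. (1 / real m) * (p^(k - Suc j) * (\<Sum>i<m. I j i)))"
          by (rule sum_distrib_left)
        then show ?thesis by (simp add: mult_ac)
      qed
      show ?thesis unfolding s1 s2 s3 s4 B_def by (simp add: ring_distribs mult_ac)
    qed
    also have "\<dots> \<le> 2 / \<mu>M * (p^k * B + (\<Sum>j<k. p^(k - Suc j) * (C * q^j)))"
    proof -
      have "(\<Sum>j<k. p^(k - Suc j) * ((1 / real m) * (\<Sum>i<m. I j i))) \<le> (\<Sum>j<k. p^(k - Suc j) * (C * q^j))"
        using tot_bound p0 unfolding I_def q_def by (intro sum_mono mult_left_mono) auto
      then show ?thesis using \<mu>M by (intro mult_left_mono add_left_mono) auto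
    qed
    also have "\<dots> \<le> 2 / \<mu>M * (q^k * B + C * (q^k / (\<alpha> * (1 - c))))"
    proof -
      have "(\<Sum>j<k. p^(k - Suc j) * (C * q^j)) = C * (\<Sum>j<k. p^(k - Suc j) * q^j)"
        by (simp add: sum_distrib_left algebra_simps)
      also have "\<dots> \<le> C * (q^k / (\<alpha> * (1 - c)))"
        using geo_bound[OF p0 pq, of k] C qp by (intro mult_left_mono) auto
      finally have h1: "(\<Sum>j<k. p^(k - Suc j) * (C * q^j)) \<le> C * (q^k / (\<alpha> * (1 - c)))" .
      have "p^k * B \<le> q^k * B" using B0 p0 pq by (simp add: mult_right_mono power_mono)
      then show ?thesis using h1 \<mu>M by (intro mult_left_mono add_mono) auto
    qed
    also have "\<dots> = cscvx * q^k"
    proof -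
      have "cscvx = 2 / \<mu>M * (B + C / (\<alpha> * (1 - c)))"
      proof -
        define K where "K = C / (\<alpha> * (1 - c))"
        have c1: "cscvx = (1 / real m) * (\<Sum>i<m. 2 / \<mu>M * (A i + K))"
          unfolding cscvx_def A_def K_def by simp
        have c2: "(\<Sum>i<m. 2 / \<mu>M * (A i + K)) = 2 / \<mu>M * ((\<Sum>i<m. A i) + real m * K)"
          by (simp only: sum_distrib_left[symmetric] sum.distrib sum_constant card_lessThan)
        show ?thesis unfolding c1 c2 B_def K_def[symmetric] using m_pos by (simp add: field_simps)
      qed
      then show ?thesis by (simp add: algebra_simps)
    qed
    finally show "(1 / real m) * (\<Sum>i<m. (\<integral>w. (norm (xt k i w - xs))\<^sup>2 \<partial>P)) \<le> cscvx * (1 - c * \<alpha>) ^ k"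
      unfolding q_def .
  qed
qed

end
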